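(* Let $G$ be a bipartite graph with bipartition $(X,Y)$, $|X| = n\geq 2$, $|Y|=m$, every $x\in X$ having degree at least $\delta$, and let $(C,x)$ be a tight pair in $G$. If $n\leq\delta$ and $Y\cap V(C)\subseteq N(x)$, then for each $w \in X\cap V(C)$ and each $y\in N(w)\setminus V(C)$, the vertex $w$ separates $y$ from $V(C)\setminus\{w\}$ in $G$ (i.e., every path in $G$ from $y$ to $V(C)\setminus\{w\}$ passes through $w$).
   Context: A tight pair in $G$ is a pair $(C,x)$ where $C$ is a longest cycle in $G$ and $x \in X \setminus V(C)$, chosen such that $|N(x)\cap V(C)|$ is maximum over all pairs $(C',x')$ with $C'$ a longest cycle in $G$ and $x' \in X\setminus V(C')$. *)

theory Defs
  imports Main
begin

definition bipartite_graph :: "'a set \<Rightarrow> 'a set \<Rightarrow> ('a \<Rightarrow> 'a \<Rightarrow> bool) \<Rightarrow> bool" where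
  "bipartite_graph X Y E \<longleftrightarrow> finite X \<and> finite Y \<and> X \<inter> Y = {} \<and>
     (\<forall>u v. E u v \<longrightarrow> E v u) \<and>
     (\<forall>u v. E u v \<longrightarrow> (u \<in> X \<and> v \<in> Y) \<or> (u \<in> Y \<and> v \<in> X))"

definition nbhd :: "('a \<Rightarrow> 'a \<Rightarrow> bool) \<Rightarrow> 'a \<Rightarrow> 'a set" where
  "nbhd E v = {u. E v u}"

definition is_path :: "('a \<Rightarrow> 'a \<Rightarrow> bool) \<Rightarrow> 'a list \<Rightarrow> bool" where
  "is_path E p \<longleftrightarrow> p \<noteq> [] \<and> distinct p \<and> (\<forall>i. Suc i < length p \<longrightarrow> E (p ! i) (p ! Suc i))"

definition is_cycle :: "('a \<Rightarrow> 'a \<Rightarrow> bool) \<Rightarrow> 'a list \<Rightarrow> bool" where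
  "is_cycle E C \<longleftrightarrow> length C \<ge> 3 \<and> is_path E C \<and> E (last C) (hd C)"

definition longest_cycle :: "('a \<Rightarrow> 'a \<Rightarrow> bool) \<Rightarrow> 'a list \<Rightarrow> bool" where
  "longest_cycle E C \<longleftrightarrow> is_cycle E C \<and> (\<forall>C'. is_cycle E C' \<longrightarrow> length C' \<le> length C)"

definition tight_pair :: "'a set \<Rightarrow> ('a \<Rightarrow> 'a \<Rightarrow> bool) \<Rightarrow> 'a list \<Rightarrow> 'a \<Rightarrow> bool" where
  "tight_pair X E C x \<longleftrightarrow> longest_cycle E C \<and> x \<in> X - set C \<and>
     (\<forall>C' x'. longest_cycle E C' \<and> x' \<in> X - set C' \<longrightarrow>
        card (nbhd E x' \<inter> set C') \<le> card (nbhd E x \<inter> set C))"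

definition separates :: "('a \<Rightarrow> 'a \<Rightarrow> bool) \<Rightarrow> 'a \<Rightarrow> 'a \<Rightarrow> 'a set \<Rightarrow> bool" where
  "separates E w y S \<longleftrightarrow> (\<forall>p. is_path E p \<and> hd p = y \<and> last p \<in> S \<longrightarrow> w \<in> set p)"

end

theory Submission
  imports Defs
begin

fun walk :: "('a \<Rightarrow> 'a \<Rightarrow> bool) \<Rightarrow> 'a list \<Rightarrow> bool" where
  "walk E [] = True"
| "walk E [a] = True"
| "walk E (a # b # t) = (E a b \<and> walk E (b # t))"

lemma walk_iff: "walk E p = (\<forall>i. Suc i < length p \<longrightarrow> E (p!i) (p!Suc i))"
proof (induction E p rule: walk.induct)
  case (3 E a b t)
  show ?case
  proof
    assume h: "walk E (a # b # t)"
    show "\<forall>i. Suc i < length (a # b # t) \<longrightarrow> E ((a # b # t) ! i) ((a # b # t) ! Suc i)"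
    proof (intro allI impI)
      fix i assume "Suc i < length (a # b # t)"
      then show "E ((a # b # t) ! i) ((a # b # t) ! Suc i)"
        using h 3 by (cases i) auto
    qed
  next
    assume h: "\<forall>i. Suc i < length (a # b # t) \<longrightarrow> E ((a # b # t) ! i) ((a # b # t) ! Suc i)"
    have "E a b" using h[rule_format, of 0] by simp
    moreover have "\<forall>i. Suc i < length (b # t) \<longrightarrow> E ((b # t) ! i) ((b # t) ! Suc i)"
      using h by (metis Suc_less_eq length_Cons nth_Cons_Suc)
    ultimately show "walk E (a # b # t)" using 3 by simp
  qed
qed auto

lemma walk_Cons: "walk E (a # xs) \<longleftrightarrow> walk E xs \<and> (xs \<noteq> [] \<longrightarrow> E a (hd xs))"
  by (cases xs) auto

lemma walk_append: "walk E (xs @ ys) \<longleftrightarrow> walk E xs \<and> walk E ys \<and> (xs \<noteq> [] \<longrightarrow> ys \<noteq> [] \<longrightarrow> E (last xs) (hd ys))"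
  by (induction xs) (auto simp: walk_Cons hd_append)

lemma walk_rev: "\<forall>u v. E u v \<longrightarrow> E v u \<Longrightarrow> walk E (rev xs) = walk E xs"
  by (induction xs) (auto simp: walk_append walk_Cons last_rev)

lemma first_in:
  "last p \<in> T \<Longrightarrow> p \<noteq> [] \<Longrightarrow> \<exists>Q z R. p = Q @ z # R \<and> z \<in> T \<and> set Q \<inter> T = {}"
proof (induction p)
  case (Cons a p)
  show ?case
  proof (cases "a \<in> T")
    case True then show ?thesis by (metis append_Nil empty_set inf_bot_left)
  next
    case False
    then have "p \<noteq> []" using Cons by auto
    then obtain Q z R where "p = Q @ z # R" "z \<in> T" "set Q \<inter> T = {}" using Cons by auto
    then show ?thesis using False by (intro exI[of _ "a # Q"]) auto
  qed
qed simp


lemma core: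
  assumes sym: "\<forall>u v. E u v \<longrightarrow> E v u"
    and part: "\<forall>u v. E u v \<longrightarrow> (u \<in> X \<and> v \<in> Y) \<or> (u \<in> Y \<and> v \<in> X)"
    and disj: "X \<inter> Y = {}"
    and wX: "w \<in> X" and wD: "walk E (w # D)" and dD: "distinct (w # D)"
    and lD: "length D \<ge> 2" and lastD: "E (last D) w"
    and xC: "x \<notin> set (w # D)" and xX: "x \<in> X"
    and xadj: "\<forall>v\<in>Y \<inter> set D. E x v"
    and Qne: "Q \<noteq> []" and wQ: "walk E Q" and dQ: "distinct Q"
    and Qdisj: "set Q \<inter> (set (w # D) \<union> {x}) = {}"
    and wQh: "E w (hd Q)" and zin: "z \<in> set D \<union> {x}" and Qz: "E (last Q) z"
  shows "\<exists>C'. is_cycle E C' \<and> length C' > Suc (length D)"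
proof -
  have noXX: "\<And>u v. E u v \<Longrightarrow> u \<in> X \<Longrightarrow> v \<in> X \<Longrightarrow> False" using part disj by blast
  have noYY: "\<And>u v. E u v \<Longrightarrow> u \<in> Y \<Longrightarrow> v \<in> Y \<Longrightarrow> False" using part disj by blast
  have XorY: "\<And>u v. E u v \<Longrightarrow> u \<in> X \<Longrightarrow> v \<in> Y" using part disj by blast
  have XorY2: "\<And>u v. E u v \<Longrightarrow> u \<in> Y \<Longrightarrow> v \<in> X" using part disj by blast
  have Dne: "D \<noteq> []" using lD by auto
  have hdD: "E w (hd D)" using wD Dne by (simp add: walk_Cons)
  have hdDY: "hd D \<in> Y" using XorY[OF hdD wX] .
  have walkD: "walk E D" using wD by (simp add: walk_Cons)
  have lastDY: "last D \<in> Y" using XorY[OF sym[rule_format, OF lastD] wX] .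
  show ?thesis
  proof (cases "z = x")
    case True
    let ?C = "w # Q @ x # D"
    have "is_cycle E ?C"
      unfolding is_cycle_def is_path_def walk_iff[symmetric]
      using Qne wQ Qz True wQh dQ Qdisj dD xC walkD xadj hdDY Dne lastD
      by (auto simp: walk_append walk_Cons Suc_le_eq)
    then show ?thesis by (intro exI[of _ ?C]) auto
  next
    case False
    then have zD: "z \<in> set D" using zin by auto
    then obtain P S where DPS: "D = P @ z # S" by (meson split_list)
    have wP: "walk E P" and wS: "walk E (z # S)" and wPz: "P \<noteq> [] \<Longrightarrow> E (last P) z"
      using walkD unfolding DPS by (auto simp: walk_append)
    have zS: "S \<noteq> [] \<Longrightarrow> E z (hd S)" using wS by (simp add: walk_Cons)
    have wS': "walk E S" using wS by (simp add: walk_Cons)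
    have hdP: "P \<noteq> [] \<Longrightarrow> hd D = hd P" unfolding DPS by simp
    have lastS: "S \<noteq> [] \<Longrightarrow> last D = last S" unfolding DPS by simp
    have dist2: "distinct (w # P @ z # S)" using dD DPS by simp
    have zXY: "z \<in> X \<or> z \<in> Y" using part Qz by blast
    show ?thesis
    proof (cases "z \<in> X")
      case True
      have Pne: "P \<noteq> []"
      proof
        assume "P = []" then have "hd D = z" using DPS by simp
        then show False using hdD wX True noXX by metis
      qed
      have Sne: "S \<noteq> []"
      proof
        assume "S = []" then have "last D = z" using DPS by simp
        then show False using lastD wX True noXX by metis
      qed
      have hS: "hd S \<in> Y" using XorY[OF zS[OF Sne] True] .
      have xhS: "E x (hd S)" using xadj hS Sne DPS by auto
      have xhP: "E (hd P) x" using sym xadj hdDY hdP[OF Pne] Pne DPS by auto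
      let ?C = "w # Q @ z # rev P @ x # S"
      have "walk E ?C"
        using Qne wQ Qz wQh wP wS' wPz Pne Sne xhS xhP sym
        by (simp add: walk_append walk_Cons walk_rev hd_rev last_rev)
      moreover have "distinct ?C" using dist2 Qdisj dQ xC DPS by auto
      moreover have "E (last ?C) (hd ?C)" using lastD lastS Sne by simp
      moreover have "length ?C > Suc (length D)" using Qne DPS by simp
      ultimately show ?thesis unfolding is_cycle_def is_path_def walk_iff[symmetric]
        by (intro exI[of _ ?C]) auto
    next
      case False
      then have zY: "z \<in> Y" using zXY by auto
      show ?thesis
      proof (cases S)
        case Nil
        have Pne: "P \<noteq> []" using lD DPS Nil by auto
        then obtain P' p where PP: "P = P' @ [p]" by (metis rev_exhaust)
        have pz: "E p z" using wPz Pne PP by simp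
        have pX: "p \<in> X" using XorY2[OF sym[rule_format, OF pz] zY] .
        have P'ne: "P' \<noteq> []"
        proof
          assume "P' = []" then have "hd D = p" using DPS PP by simp
          then show False using hdD wX pX noXX by metis
        qed
        have wP': "walk E P'" and lP': "E (last P') p" using wP P'ne unfolding PP by (auto simp: walk_append)
        have lP'Y: "last P' \<in> Y" using XorY[OF sym[rule_format, OF lP'] pX] .
        have xl: "E x (last P')" using xadj lP'Y DPS PP P'ne by auto
        have hP': "hd D = hd P'" using DPS PP P'ne by simp
        let ?C = "w # Q @ z # x # rev P'"
        have xz: "E z x" using sym xadj zY zD by auto
        have "walk E ?C"
          using Qne wQ Qz wQh wP' xl xz P'ne sym
          by (simp add: walk_append walk_Cons walk_rev hd_rev last_rev)
        moreover have "distinct ?C" using dist2 Qdisj dQ xC DPS PP by auto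
        moreover have "E (last ?C) (hd ?C)" using hdD hP' P'ne sym by (simp add: last_rev)
        moreover have "length ?C > Suc (length D)" using Qne DPS PP Nil by simp
        ultimately show ?thesis unfolding is_cycle_def is_path_def walk_iff[symmetric]
          by (intro exI[of _ ?C]) auto
      next
        case (Cons s S2)
        have zs: "E z s" using zS Cons by simp
        have sX: "s \<in> X" using XorY2[OF zs zY] .
        have S2ne: "S2 \<noteq> []"
        proof
          assume "S2 = []" then have "last D = s" using DPS Cons by simp
          then show False using lastD wX sX noXX by metis
        qed
        have wS2: "walk E S2" and sS2: "E s (hd S2)" using wS' S2ne Cons by (auto simp: walk_Cons)
        have hS2Y: "hd S2 \<in> Y" using XorY[OF sS2 sX] .
        have xh: "E x (hd S2)" using xadj hS2Y DPS Cons S2ne by auto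
        have lz: "E (last (z # rev P)) x"
        proof (cases "P = []")
          case True then show ?thesis using sym xadj zY zD by auto
        next
          case False then show ?thesis using sym xadj hdDY hdP DPS by (auto simp: last_rev)
        qed
        let ?C = "w # Q @ (z # rev P) @ x # S2"
        have wzP: "walk E (z # rev P)"
          using wP wPz sym by (cases "P = []") (simp_all add: walk_Cons walk_rev hd_rev)
        have "walk E ?C"
          using Qne wQ Qz wQh wzP lz xh S2ne wS2
          by (cases "P = []") (simp_all add: walk_append walk_Cons)
        moreover have "distinct ?C" using dist2 Qdisj dQ xC DPS Cons by auto
        moreover have "E (last ?C) (hd ?C)" using lastD lastS Cons S2ne by simp
        moreover have "length ?C > Suc (length D)" using Qne DPS Cons by simp
        ultimately show ?thesis unfolding is_cycle_def is_path_def walk_iff[symmetric]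
          by (intro exI[of _ ?C]) auto
      qed
    qed
  qed
qed


theorem lemma3:
  fixes X Y :: "'a set" and E :: "'a \<Rightarrow> 'a \<Rightarrow> bool" and n m \<delta> :: nat
    and C :: "'a list" and x :: 'a
  assumes "bipartite_graph X Y E"
    and "card X = n" and "n \<ge> 2" and "card Y = m"
    and "\<forall>v\<in>X. card (nbhd E v) \<ge> \<delta>"
    and "tight_pair X E C x"
    and "n \<le> \<delta>"
    and "Y \<inter> set C \<subseteq> nbhd E x"
  shows "\<forall>w\<in>X \<inter> set C. \<forall>y\<in>nbhd E w - set C. separates E w y (set C - {w})"
proof (intro ballI)
  fix w y assume wXC: "w \<in> X \<inter> set C" and yN: "y \<in> nbhd E w - set C"
  have sym: "\<forall>u v. E u v \<longrightarrow> E v u"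
    and part: "\<forall>u v. E u v \<longrightarrow> (u \<in> X \<and> v \<in> Y) \<or> (u \<in> Y \<and> v \<in> X)"
    and disj: "X \<inter> Y = {}" using assms(1) unfolding bipartite_graph_def by auto
  have lc: "longest_cycle E C" and xX: "x \<in> X" and xC: "x \<notin> set C"
    using assms(6) unfolding tight_pair_def by auto
  have cyc: "is_cycle E C" and maxc: "\<And>C'. is_cycle E C' \<Longrightarrow> length C' \<le> length C"
    using lc unfolding longest_cycle_def by auto
  have Ewy: "E w y" and yC: "y \<notin> set C" using yN unfolding nbhd_def by auto
  have yY: "y \<in> Y" using part Ewy wXC disj by blast
  have yx: "y \<noteq> x" using yY xX disj by blast
  have xadjC: "\<forall>v\<in>Y \<inter> set C. E x v" using assms(8) unfolding nbhd_def by auto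
  show "separates E w y (set C - {w})"
    unfolding separates_def
  proof (intro allI impI)
    fix p assume H: "is_path E p \<and> hd p = y \<and> last p \<in> set C - {w}"
    then have pp: "is_path E p" and hp: "hd p = y" and lp: "last p \<in> set C - {w}" by auto
    show "w \<in> set p"
    proof (rule ccontr)
      assume wp: "w \<notin> set p"
      have pne: "p \<noteq> []" and dp: "distinct p" and wlk: "walk E p"
        using pp unfolding is_path_def walk_iff by auto
      obtain Q z R where pQ: "p = Q @ z # R" and zT: "z \<in> set C \<union> {x}"
        and QT: "set Q \<inter> (set C \<union> {x}) = {}"
        using first_in[of p "set C \<union> {x}"] lp pne by auto
      have Qne: "Q \<noteq> []" using pQ hp yC yx zT by (cases Q) auto
      have wQ: "walk E Q" and Qz: "E (last Q) z" using wlk Qne unfolding pQ by (auto simp: walk_append)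
      have dQ: "distinct Q" using dp pQ by simp
      have hQ: "hd Q = y" using hp pQ Qne by simp
      have zw: "z \<noteq> w" using wp pQ by auto
      obtain A B where CAB: "C = A @ w # B" using wXC by (meson IntD2 split_list)
      define D where "D = B @ A"
      have dC: "distinct C" and wC: "walk E C" and lC: "length C \<ge> 3" and cl: "E (last C) (hd C)"
        using cyc unfolding is_cycle_def is_path_def walk_iff by auto
      have setD: "set (w # D) = set C" unfolding D_def CAB by auto
      have dD: "distinct (w # D)" using dC unfolding D_def CAB by auto
      have lD: "length D \<ge> 2" and lenC: "length C = Suc (length D)" using lC unfolding D_def CAB by auto
      have wD: "walk E (w # D) \<and> E (last D) w"
      proof (cases "A = []")
        case True then show ?thesis using wC cl lD unfolding D_def CAB by (auto split: if_splits)
      next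
        case False
        have "walk E A" "walk E (w # B)" "E (last A) w" using wC False unfolding CAB by (auto simp: walk_append)
        moreover have "E (last (w # B)) (hd A)" using cl False unfolding CAB by simp
        ultimately have "walk E ((w # B) @ A)" using False by (subst walk_append) simp
        then show ?thesis using False \<open>E (last A) w\<close> unfolding D_def by simp
      qed
      have "\<exists>C'. is_cycle E C' \<and> length C' > Suc (length D)"
        apply (rule core[OF sym part disj, of w D x Q z])
        using wXC wD dD lD xC setD xX xadjC Qne wQ dQ QT Ewy hQ zT zw Qz by auto
      then show False using maxc lenC by fastforce
    qed
  qed
qed

end
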